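(* Let $t>204$ be an integer and adopt the setting described in the context. If $r$ is a positive integer and $h\in\{0,1\}$, then $\Sigma_{r,0}$ and $\Sigma_{r+h,1}$ are not both equal to $0$.
   Context: Let $P(x,y)=x^{4}+4tx^{3}y-6tx^{2}y^{2}-4t^{2}xy^{3}+t^{2}y^{4}$. Fix complex numbers $\alpha,\beta$ with $\alpha^4=1+i\sqrt t$, $\beta^4=-1+i\sqrt t$, and for integers $x,y$ set $\xi(x,y)=\sqrt2\,\alpha(x-i\sqrt t\,y)$, $\eta(x,y)=\sqrt2\,\beta(x+i\sqrt t\,y)$, $z(x,y)=1-(\eta(x,y)/\xi(x,y))^4$. An integer pair $(x,y)$ is related to a fourth root of unity $\omega$ if $|\omega-\eta(x,y)/\xi(x,y)|<\frac{\pi}{12}|z(x,y)|$. Let $\omega\in\{\pm1,\pm i\}$ and let $(x_1,y_1)\ne(x_2,y_2)$ be two pairs of coprime positive integers, each satisfying $0<P(x,y)\le t^2$ and $xy>64t^3$, both related to $\omega$, with $|\xi(x_2,y_2)|\ge|\xi(x_1,y_1)|$. Write $\xi_i=\xi(x_i,y_i)$, $\eta_i=\eta(x_i,y_i)$, $z_1=z(x_1,y_1)$. With binomials $\binom{a}{m}=a(a-1)\cdots(a-m+1)/m!$, for positive integers $r$ and $g\in\{0,1\}$ let $A_{r,g}(z)=\sum_{m=0}^{r}\binom{r-g+\frac14}{m}\binom{2r-g-m}{r-g}(-z)^m$, $B_{r,g}(z)=\sum_{m=0}^{r-g}\binom{r-\frac14}{m}\binom{2r-g-m}{r}(-z)^m$,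 and $$\Sigma_{r,g}=\frac{\eta_2}{\xi_2}A_{r,g}(z_1)-(-1)^r\frac{\eta_1}{\xi_1}B_{r,g}(z_1).$$ *)

theory Defs
  imports Complex_Main
begin

definition Pform :: "int \<Rightarrow> int \<Rightarrow> int \<Rightarrow> int" where
  "Pform t x y = x^4 + 4*t*x^3*y - 6*t*x^2*y^2 - 4*t^2*x*y^3 + t^2*y^4"

definition sqt :: "int \<Rightarrow> complex" where
  "sqt t = complex_of_real (sqrt (real_of_int t))"

definition xi :: "int \<Rightarrow> complex \<Rightarrow> int \<Rightarrow> int \<Rightarrow> complex" where
  "xi t \<alpha> x y = complex_of_real (sqrt 2) * \<alpha> * (of_int x - \<i> * sqt t * of_int y)"

definition eta :: "int \<Rightarrow> complex \<Rightarrow> int \<Rightarrow> int \<Rightarrow> complex" where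
  "eta t \<beta> x y = complex_of_real (sqrt 2) * \<beta> * (of_int x + \<i> * sqt t * of_int y)"

definition zf :: "int \<Rightarrow> complex \<Rightarrow> complex \<Rightarrow> int \<Rightarrow> int \<Rightarrow> complex" where
  "zf t \<alpha> \<beta> x y = 1 - (eta t \<beta> x y / xi t \<alpha> x y) ^ 4"

definition related :: "int \<Rightarrow> complex \<Rightarrow> complex \<Rightarrow> int \<Rightarrow> int \<Rightarrow> complex \<Rightarrow> bool" where
  "related t \<alpha> \<beta> x y \<omega> \<longleftrightarrow>
     cmod (\<omega> - eta t \<beta> x y / xi t \<alpha> x y) < pi / 12 * cmod (zf t \<alpha> \<beta> x y)"

text \<open>Here g is 0 or 1 and r \<ge> 1, so the natural-number subtractions below never truncate.\<close>
definition Apoly :: "nat \<Rightarrow> nat \<Rightarrow> complex \<Rightarrow> complex" where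
  "Apoly r g z = (\<Sum>m = 0..r. complex_of_real ((real (r - g) + 1/4) gchoose m)
                   * of_nat ((2*r - g - m) choose (r - g)) * (-z)^m)"

definition Bpoly :: "nat \<Rightarrow> nat \<Rightarrow> complex \<Rightarrow> complex" where
  "Bpoly r g z = (\<Sum>m = 0..r - g. complex_of_real ((real r - 1/4) gchoose m)
                   * of_nat ((2*r - g - m) choose r) * (-z)^m)"

definition Sigma :: "int \<Rightarrow> complex \<Rightarrow> complex \<Rightarrow> int \<Rightarrow> int \<Rightarrow> int \<Rightarrow> int \<Rightarrow> nat \<Rightarrow> nat \<Rightarrow> complex" where
  "Sigma t \<alpha> \<beta> x1 y1 x2 y2 r g =
     eta t \<beta> x2 y2 / xi t \<alpha> x2 y2 * Apoly r g (zf t \<alpha> \<beta> x1 y1)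
     - (-1)^r * (eta t \<beta> x1 y1 / xi t \<alpha> x1 y1) * Bpoly r g (zf t \<alpha> \<beta> x1 y1)"

end

theory Submission
  imports Defs
begin

definition cA :: "nat \<Rightarrow> nat \<Rightarrow> nat \<Rightarrow> real" where
  "cA r g m = (if m \<le> r then ((real (r - g) + 1/4) gchoose m) * real ((2*r - g - m) choose (r - g)) else 0)"
definition cB :: "nat \<Rightarrow> nat \<Rightarrow> nat \<Rightarrow> real" where
  "cB r g m = (if m \<le> r - g then ((real r - 1/4) gchoose m) * real ((2*r - g - m) choose r) else 0)"

lemma Apoly_eq: assumes "r < K"
  shows "Apoly r g z = (\<Sum>m<K. complex_of_real (cA r g m) * (-z)^m)"
proof -
  have "Apoly r g z = (\<Sum>m\<in>{0..r}. complex_of_real (cA r g m) * (-z)^m)"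
    unfolding Apoly_def cA_def by (intro sum.cong) auto
  also have "\<dots> = (\<Sum>m<K. complex_of_real (cA r g m) * (-z)^m)"
    using assms by (intro sum.mono_neutral_left) (auto simp: cA_def)
  finally show ?thesis .
qed

lemma Bpoly_eq: assumes "r < K"
  shows "Bpoly r g z = (\<Sum>m<K. complex_of_real (cB r g m) * (-z)^m)"
proof -
  have "Bpoly r g z = (\<Sum>m\<in>{0..r-g}. complex_of_real (cB r g m) * (-z)^m)"
    unfolding Bpoly_def cB_def by (intro sum.cong) auto
  also have "\<dots> = (\<Sum>m<K. complex_of_real (cB r g m) * (-z)^m)"
    using assms by (intro sum.mono_neutral_left) (auto simp: cB_def)
  finally show ?thesis .
qed

lemma poly_rel:
  fixes ca cb cc :: "nat \<Rightarrow> real" and w :: complex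
  assumes "\<And>m. ca m = \<alpha> * cb m + \<beta> * (if m = 0 then 0 else cc (m - 1))"
  shows "(\<Sum>m<Suc K. complex_of_real (ca m) * w^m) =
         of_real \<alpha> * (\<Sum>m<Suc K. complex_of_real (cb m) * w^m)
         + of_real \<beta> * w * (\<Sum>m<K. complex_of_real (cc m) * w^m)"
proof -
  have "(\<Sum>m<Suc K. complex_of_real (ca m) * w^m) =
     (\<Sum>m<Suc K. of_real \<alpha> * (complex_of_real (cb m) * w^m))
      + (\<Sum>m<Suc K. of_real \<beta> * complex_of_real (if m = 0 then 0 else cc (m - 1)) * w^m)"
    by (simp add: assms sum.distrib algebra_simps)
  also have "(\<Sum>m<Suc K. of_real \<beta> * complex_of_real (if m = 0 then 0 else cc (m - 1)) * w^m)
      = of_real \<beta> * w * (\<Sum>m<K. complex_of_real (cc m) * w^m)"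
    by (subst sum.lessThan_Suc_shift) (simp add: sum_distrib_left algebra_simps)
  finally show ?thesis by (simp only: sum_distrib_left)
qed



lemma q_fact: fixes R :: real assumes "R \<ge> 0"
  shows "(R+1)*((2*R+1)/(R+1)) = 2*R+1" "(4*(R+1))*((4*R+1)/(4*(R+1))) = 4*R+1"
    "(4*(R+1))*((4*R+3)/(4*(R+1))) = 4*R+3"
  using assms by auto

lemma alg2A: fixes R K G1 g X Z :: real assumes "R \<ge> 0" "K \<ge> 0"
  "(K+1)*G1 = (R+5/4)*g" "(R+1)*Z = (2*R-K+1)*X"
  shows "G1*Z = 2*((G1-g)*X) + (4*R+3)/(4*(R+1))*(g*X)"
proof -
  define q where "q = (4*R+3)/(4*(R+1))"
  have qf: "(4*(R+1))*q = 4*R+3" unfolding q_def using q_fact[OF assms(1)] by simp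
  have nz: "4*(K+1)*(R+1) \<noteq> 0" using assms by auto
  have "4*(K+1)*(R+1)*(G1*Z) = 4*((K+1)*G1)*((R+1)*Z)" by (simp add: algebra_simps)
  also have "\<dots> = 4*((R+5/4)*g)*((2*R-K+1)*X)" using assms by simp
  also have "\<dots> = 8*(R+1)*X*((R+5/4)*g) - 8*(K+1)*(R+1)*g*X + (K+1)*(4*R+3)*g*X"
    by (simp add: algebra_simps)
  also have "\<dots> = 8*(R+1)*X*((K+1)*G1) - 8*(K+1)*(R+1)*g*X + (K+1)*((4*(R+1))*q)*g*X"
    using assms qf by simp
  also have "\<dots> = 4*(K+1)*(R+1)*(2*((G1-g)*X) + q*(g*X))"
    by (simp add: algebra_simps)
  finally show ?thesis using nz unfolding q_def by simp
qed

lemma alg1A: fixes R K GA g X Y Z :: real assumes "R \<ge> 0" "K \<ge> 0"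
  "(K+1)*GA = (R+1/4)*g" "Z = X + Y" "R*Z = (2*R-K)*Y"
  shows "GA*Z = (2*R+1)/(R+1)*(GA*X) + (4*R+1)/(4*(R+1))*(g*Y)"
proof -
  define q1 where "q1 = (2*R+1)/(R+1)"
  define q where "q = (4*R+1)/(4*(R+1))"
  have qf: "(4*(R+1))*q = 4*R+1" "(R+1)*q1 = 2*R+1" unfolding q_def q1_def using q_fact[OF assms(1)] by simp_all
  have nz: "4*(K+1)*(R+1) \<noteq> 0" using assms by auto
  have rx: "R*X = (R-K)*Y" using assms(4,5) by (simp add: algebra_simps)
  have "4*(K+1)*(R+1)*(GA*Z) = 4*(R+1)*Z*((K+1)*GA)" by (simp add: algebra_simps)
  also have "\<dots> = (4*R+1)*g*((R+1)*X + (R+1)*Y)" using assms(3,4) by (simp add: algebra_simps)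
  also have "\<dots> = (4*R+1)*g*((2*R+1)*X + (K+1)*Y) + (4*R+1)*g*((R-K)*Y - R*X)"
    by (simp add: algebra_simps)
  also have "\<dots> = (4*R+1)*g*((2*R+1)*X + (K+1)*Y)" using rx by simp
  also have "\<dots> = 4*(2*R+1)*X*((R+1/4)*g) + (4*R+1)*(K+1)*g*Y" by (simp add: algebra_simps)
  also have "\<dots> = 4*((R+1)*q1)*X*((K+1)*GA) + ((4*(R+1))*q)*(K+1)*g*Y" using assms(3) qf by simp
  also have "\<dots> = 4*(K+1)*(R+1)*(q1*(GA*X) + q*(g*Y))"
    by (simp add: algebra_simps)
  finally show ?thesis using nz unfolding q_def q1_def by simp
qed

lemma alg1B: fixes R K G1 g X Z :: real assumes "R \<ge> 0" "K \<ge> 0"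
  "(K+1)*G1 = (R+3/4)*g" "(R+1)*Z = (2*R-K)*X"
  shows "G1*Z = (2*R+1)/(R+1)*((G1-g)*X) + (4*R+1)/(4*(R+1))*(g*X)"
proof -
  define q1 where "q1 = (2*R+1)/(R+1)"
  define q where "q = (4*R+1)/(4*(R+1))"
  have qf: "(4*(R+1))*q = 4*R+1" "(R+1)*q1 = 2*R+1" unfolding q_def q1_def using q_fact[OF assms(1)] by simp_all
  have nz: "4*(K+1)*(R+1) \<noteq> 0" using assms by auto
  have "4*(K+1)*(R+1)*(G1*Z) = 4*((K+1)*G1)*((R+1)*Z)" by (simp add: algebra_simps)
  also have "\<dots> = 4*((R+3/4)*g)*((2*R-K)*X)" using assms by simp
  also have "\<dots> = 4*(2*R+1)*X*((R+3/4)*g) - 4*(2*R+1)*(K+1)*g*X + (K+1)*(4*R+1)*g*X"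
    by (simp add: algebra_simps)
  also have "\<dots> = 4*((R+1)*q1)*X*((K+1)*G1) - 4*((R+1)*q1)*(K+1)*g*X + (K+1)*((4*(R+1))*q)*g*X"
    using assms qf by simp
  also have "\<dots> = 4*(K+1)*(R+1)*(q1*((G1-g)*X) + q*(g*X))"
    by (simp add: algebra_simps)
  finally show ?thesis using nz unfolding q_def q1_def by simp
qed

lemma alg2B: fixes R K G1 g X V Z :: real assumes "R \<ge> 0" "K \<ge> 0"
  "(K+1)*G1 = (R+3/4)*g" "Z = X + V" "(R+1)*Z = (2*R-K+1)*X"
  shows "G1*Z = 2*(G1*V) + (4*R+3)/(4*(R+1))*(g*X)"
proof -
  define q where "q = (4*R+3)/(4*(R+1))"
  have qf: "(4*(R+1))*q = 4*R+3" unfolding q_def using q_fact[OF assms(1)] by simp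
  have nz: "4*(K+1)*(R+1) \<noteq> 0" using assms by auto
  have V: "V = Z - X" using assms by simp
  have "4*(K+1)*(R+1)*(G1*Z) = 4*((K+1)*G1)*((R+1)*Z)" by (simp add: algebra_simps)
  also have "\<dots> = 4*((R+3/4)*g)*((2*R-K+1)*X)" using assms by simp
  also have "\<dots> = 8*(R+1)*((R+3/4)*g)*X - (K+1)*(4*R+3)*g*X"
    by (simp add: algebra_simps)
  also have "\<dots> = 8*(R+1)*((K+1)*G1)*X - (K+1)*((4*(R+1))*q)*g*X"
    using assms qf by simp
  also have "\<dots> = 4*(K+1)*(R+1)*(2*(G1*X) - q*(g*X))"
    by (simp add: algebra_simps)
  finally have "G1*Z = 2*(G1*X) - q*(g*X)" using nz by simp
  thus ?thesis unfolding V q_def by (simp add: algebra_simps)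
qed


lemma natmul_real: "(a::nat)*b = c*d \<Longrightarrow> real a * real b = real c * real d"
  by (metis of_nat_mult)

lemma gfac: "(real k + 1) * ((a + 1) gchoose Suc k) = (a + 1) * (a gchoose k)"
  using Suc_times_gbinomial[of k a] by (simp add: add.commute)

lemma rel2A: "cA (r+1) 0 m = 2 * cA (r+1) 1 m + (4*r+3)/(4*(r+1)) * (if m = 0 then 0 else cA r 0 (m-1))"
proof (cases m)
  case 0
  have s: "Suc (2*r) choose Suc r = Suc (2*r) choose r"
    using binomial_symmetric[of "Suc r" "Suc (2*r)"] by simp
  have "Suc (Suc (2*r)) choose Suc r = 2 * (Suc (2*r) choose r)"
    unfolding binomial_Suc_Suc[of "Suc(2*r)" r] s by simp
  hence "real (Suc (Suc (2*r)) choose Suc r) = 2 * real (Suc (2*r) choose r)" by simp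
  thus ?thesis using 0 by (simp add: cA_def numeral_2_eq_2)
next
  case (Suc k)
  show ?thesis
  proof (cases "k \<le> r")
    case False thus ?thesis using Suc by (simp add: cA_def)
  next
    case True
    define a where "a = real r + 1/4"
    define g where "g = a gchoose k"
    define G1 where "G1 = (a+1) gchoose Suc k"
    define N where "N = 2*r - k"
    have f1: "(real k+1)*G1 = (real r+5/4)*g" unfolding G1_def g_def using gfac[of k a] by (simp add: a_def)
    have h2: "(a gchoose Suc k) = G1 - g" unfolding g_def G1_def by (simp add: gbinomial_Suc_Suc)
    have b1: "(real r+1) * real (Suc N choose Suc r) = (2*real r - real k + 1) * real (N choose r)"
      using natmul_real[OF Suc_times_binomial[of r N]] True by (simp add: N_def of_nat_diff add.commute)
    have c1: "cA (r+1) 0 (Suc k) = G1 * real (Suc N choose Suc r)"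
      using True by (simp add: cA_def G1_def a_def N_def Suc_diff_le add.commute)
    have c2: "cA (r+1) 1 (Suc k) = (a gchoose Suc k) * real (N choose r)"
      using True by (simp add: cA_def a_def N_def)
    have c3: "cA r 0 k = g * real (N choose r)"
      using True by (simp add: cA_def a_def N_def g_def)
    show ?thesis unfolding Suc c1 c2 h2 using alg2A[OF _ _ f1 b1] c3 by simp
  qed
qed


lemma rel1A: assumes "r \<ge> 1"
  shows "cA (r+1) 1 m = (2*r+1)/(r+1) * cA r 0 m + (4*r+1)/(4*(r+1)) * (if m = 0 then 0 else cA r 1 (m-1))"
proof (cases m)
  case 0
  have s: "Suc (2*r) choose Suc r = Suc (2*r) choose r"
    using binomial_symmetric[of "Suc r" "Suc (2*r)"] by simp
  have "real (Suc (2*r)) * real (2*r choose r) = real (Suc (2*r) choose r) * real (Suc r)"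
    using natmul_real[OF Suc_times_binomial_eq[of "2*r" r]] unfolding s .
  hence "real (Suc (2*r) choose r) = (2*real r+1)/(real r+1) * real (2*r choose r)"
    by (simp add: field_simps)
  thus ?thesis using 0 by (simp add: cA_def)
next
  case (Suc k)
  obtain q where q: "r = Suc q" using assms by (cases r) auto
  show ?thesis
  proof (cases "k \<le> r")
    case False thus ?thesis using Suc by (simp add: cA_def)
  next
    case True
    define a where "a = real r + 1/4"
    define g where "g = (a-1) gchoose k"
    define GA where "GA = a gchoose Suc k"
    define M where "M = 2*r - k - 1"
    have f1: "(real k+1)*GA = (real r+1/4)*g" unfolding GA_def g_def using gfac[of k "a-1"] by (simp add: a_def add.commute)
    have pas: "real (Suc M choose r) = real (M choose r) + real (M choose q)"
      unfolding q binomial_Suc_Suc by simp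
    have b1: "real r * real (Suc M choose r) = (2*real r - real k) * real (M choose q)"
      using natmul_real[OF Suc_times_binomial[of q M]] True q by (simp add: M_def of_nat_diff)
    have sM: "2*(r+1) - 1 - Suc k = Suc M" using True assms by (simp add: M_def)
    have c1: "cA (r+1) 1 (Suc k) = GA * real (Suc M choose r)"
      using True by (simp only: cA_def GA_def a_def sM) simp
    have c2: "cA r 0 (Suc k) = GA * real (M choose r)"
    proof (cases "Suc k \<le> r")
      case True thus ?thesis by (simp add: cA_def GA_def a_def M_def)
    next
      case False
      hence "M < r" using True assms by (simp add: M_def)
      thus ?thesis using False by (simp add: cA_def)
    qed
    have c3: "cA r 1 k = g * real (M choose q)"
      using True q by (simp add: cA_def a_def M_def g_def add.commute)
    show ?thesis unfolding Suc c1 c2 using alg1A[OF _ _ f1 pas b1] c3 by simp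
  qed
qed

lemma rel1B: assumes "r \<ge> 1"
  shows "cB (r+1) 1 m = (2*r+1)/(r+1) * cB r 0 m + (4*r+1)/(4*(r+1)) * (if m = 0 then 0 else cB r 1 (m-1))"
proof (cases m)
  case 0
  have "real (Suc r) * real (Suc (2*r) choose Suc r) = real (Suc (2*r)) * real (2*r choose r)"
    using natmul_real[OF Suc_times_binomial[of r "2*r"]] .
  hence "real (Suc (2*r) choose Suc r) = (2*real r+1)/(real r+1) * real (2*r choose r)"
    by (simp add: field_simps)
  thus ?thesis using 0 by (simp add: cB_def)
next
  case (Suc k)
  show ?thesis
  proof (cases "k < r")
    case False thus ?thesis using Suc assms by (simp add: cB_def)
  next
    case True
    define b where "b = real r - 1/4"
    define g where "g = b gchoose k"
    define G1 where "G1 = (b+1) gchoose Suc k"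
    define N where "N = 2*r - k - 1"
    have f1: "(real k+1)*G1 = (real r+3/4)*g" unfolding G1_def g_def using gfac[of k b] by (simp add: b_def)
    have h2: "(b gchoose Suc k) = G1 - g" unfolding g_def G1_def by (simp add: gbinomial_Suc_Suc)
    have b1: "(real r+1) * real (Suc N choose Suc r) = (2*real r - real k) * real (N choose r)"
      using natmul_real[OF Suc_times_binomial[of r N]] True by (simp add: N_def of_nat_diff add.commute)
    have sN: "2*(r+1) - 1 - Suc k = Suc N" using True by (simp add: N_def)
    have c1: "cB (r+1) 1 (Suc k) = G1 * real (Suc N choose Suc r)"
      using True by (simp only: cB_def G1_def b_def sN) (simp add: algebra_simps del: binomial_Suc_Suc)
    have c2: "cB r 0 (Suc k) = (b gchoose Suc k) * real (N choose r)"
      using True by (simp add: cB_def b_def N_def)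
    have c3: "cB r 1 k = g * real (N choose r)"
      using True by (simp add: cB_def b_def N_def g_def)
    show ?thesis unfolding Suc c1 c2 h2 using alg1B[OF _ _ f1 b1] c3 by simp
  qed
qed

lemma rel2B: "cB (r+1) 0 m = 2 * cB (r+1) 1 m + (4*r+3)/(4*(r+1)) * (if m = 0 then 0 else cB r 0 (m-1))"
proof (cases m)
  case 0
  have s: "Suc (2*r) choose Suc r = Suc (2*r) choose r"
    using binomial_symmetric[of "Suc r" "Suc (2*r)"] by simp
  have "Suc (Suc (2*r)) choose Suc r = 2 * (Suc (2*r) choose Suc r)"
    unfolding binomial_Suc_Suc[of "Suc(2*r)" r] s by simp
  hence "real (Suc (Suc (2*r)) choose Suc r) = 2 * real (Suc (2*r) choose Suc r)" by simp
  thus ?thesis using 0 by (simp add: cB_def numeral_2_eq_2)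
next
  case (Suc k)
  show ?thesis
  proof (cases "k \<le> r")
    case False thus ?thesis using Suc by (simp add: cB_def)
  next
    case True
    define b where "b = real r - 1/4"
    define g where "g = b gchoose k"
    define G1 where "G1 = (b+1) gchoose Suc k"
    define N where "N = 2*r - k"
    have f1: "(real k+1)*G1 = (real r+3/4)*g" unfolding G1_def g_def using gfac[of k b] by (simp add: b_def)
    have pas: "real (Suc N choose Suc r) = real (N choose r) + real (N choose Suc r)"
      unfolding binomial_Suc_Suc by simp
    have b1: "(real r+1) * real (Suc N choose Suc r) = (2*real r - real k + 1) * real (N choose r)"
      using natmul_real[OF Suc_times_binomial[of r N]] True by (simp add: N_def of_nat_diff add.commute)
    have c1: "cB (r+1) 0 (Suc k) = G1 * real (Suc N choose Suc r)"
      using True by (simp add: cB_def G1_def b_def N_def Suc_diff_le algebra_simps)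
    have c2: "cB (r+1) 1 (Suc k) = G1 * real (N choose Suc r)"
    proof (cases "Suc k \<le> r")
      case True thus ?thesis by (simp add: cB_def G1_def b_def N_def algebra_simps)
    next
      case False
      hence "N < Suc r" using True by (simp add: N_def)
      thus ?thesis using False by (simp add: cB_def)
    qed
    have c3: "cB r 0 k = g * real (N choose r)"
      using True by (simp add: cB_def b_def N_def g_def)
    show ?thesis unfolding Suc c1 c2 using alg2B[OF _ _ f1 pas b1] c3 by simp
  qed
qed


lemma PR2A: 
  shows "Apoly (r+1) 0 z = complex_of_real (2) * Apoly (r+1) 1 z + complex_of_real ((4*real r+3)/(4*(real r+1))) * (-z) * Apoly r 0 z"
proof -
  have e0: "Apoly (r+1) 0 z = (\<Sum>m<Suc (Suc r). complex_of_real (cA (r+1) 0 m) * (-z)^m)" by (rule Apoly_eq) simp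
  have e1: "Apoly (r+1) 1 z = (\<Sum>m<Suc (Suc r). complex_of_real (cA (r+1) 1 m) * (-z)^m)" by (rule Apoly_eq) simp
  have e2: "Apoly r 0 z = (\<Sum>m<Suc r. complex_of_real (cA r 0 m) * (-z)^m)" by (rule Apoly_eq) simp
  show ?thesis unfolding e0 e1 e2 by (rule poly_rel) (rule rel2A)
qed

lemma PR2B: 
  shows "Bpoly (r+1) 0 z = complex_of_real (2) * Bpoly (r+1) 1 z + complex_of_real ((4*real r+3)/(4*(real r+1))) * (-z) * Bpoly r 0 z"
proof -
  have e0: "Bpoly (r+1) 0 z = (\<Sum>m<Suc (Suc r). complex_of_real (cB (r+1) 0 m) * (-z)^m)" by (rule Bpoly_eq) simp
  have e1: "Bpoly (r+1) 1 z = (\<Sum>m<Suc (Suc r). complex_of_real (cB (r+1) 1 m) * (-z)^m)" by (rule Bpoly_eq) simp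
  have e2: "Bpoly r 0 z = (\<Sum>m<Suc r. complex_of_real (cB r 0 m) * (-z)^m)" by (rule Bpoly_eq) simp
  show ?thesis unfolding e0 e1 e2 by (rule poly_rel) (rule rel2B)
qed

lemma PR1A: assumes "r \<ge> 1"
  shows "Apoly (r+1) 1 z = complex_of_real ((2*real r+1)/(real r+1)) * Apoly r 0 z + complex_of_real ((4*real r+1)/(4*(real r+1))) * (-z) * Apoly r 1 z"
proof -
  have e0: "Apoly (r+1) 1 z = (\<Sum>m<Suc (Suc r). complex_of_real (cA (r+1) 1 m) * (-z)^m)" by (rule Apoly_eq) simp
  have e1: "Apoly r 0 z = (\<Sum>m<Suc (Suc r). complex_of_real (cA r 0 m) * (-z)^m)" by (rule Apoly_eq) simp
  have e2: "Apoly r 1 z = (\<Sum>m<Suc r. complex_of_real (cA r 1 m) * (-z)^m)" by (rule Apoly_eq) simp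
  show ?thesis unfolding e0 e1 e2 by (rule poly_rel) (rule rel1A[OF assms])
qed

lemma PR1B: assumes "r \<ge> 1"
  shows "Bpoly (r+1) 1 z = complex_of_real ((2*real r+1)/(real r+1)) * Bpoly r 0 z + complex_of_real ((4*real r+1)/(4*(real r+1))) * (-z) * Bpoly r 1 z"
proof -
  have e0: "Bpoly (r+1) 1 z = (\<Sum>m<Suc (Suc r). complex_of_real (cB (r+1) 1 m) * (-z)^m)" by (rule Bpoly_eq) simp
  have e1: "Bpoly r 0 z = (\<Sum>m<Suc (Suc r). complex_of_real (cB r 0 m) * (-z)^m)" by (rule Bpoly_eq) simp
  have e2: "Bpoly r 1 z = (\<Sum>m<Suc r. complex_of_real (cB r 1 m) * (-z)^m)" by (rule Bpoly_eq) simp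
  show ?thesis unfolding e0 e1 e2 by (rule poly_rel) (rule rel1B[OF assms])
qed


lemma seq_lower:
  fixes f :: "nat \<Rightarrow> complex" and w :: complex
  assumes w: "cmod w \<le> 1/2"
    and rec: "\<And>n. n \<ge> 1 \<Longrightarrow> \<exists>P \<kappa>::real. P \<ge> 3/2 \<and> 0 < \<kappa> \<and> \<kappa> \<le> 1 \<and>
                 f (Suc n) = of_real P * f n + of_real \<kappa> * w * f (n-1)"
    and f0: "cmod (f 0) \<ge> 1" and f1: "cmod (f 1) \<ge> cmod (f 0)"
  shows "1 \<le> cmod (f n) \<and> cmod (f n) \<le> cmod (f (Suc n))"
proof (induction n)
  case 0 thus ?case using f0 f1 by simp
next
  case (Suc n)
  obtain P \<kappa> :: real where P: "P \<ge> 3/2" "0 < \<kappa>" "\<kappa> \<le> 1"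
    and eq: "f (Suc (Suc n)) = of_real P * f (Suc n) + of_real \<kappa> * w * f n"
    using rec[of "Suc n"] by auto
  have e2: "of_real P * f (Suc n) = f (Suc (Suc n)) - of_real \<kappa> * w * f n" using eq by simp
  have "P * cmod (f (Suc n)) = cmod (of_real P * f (Suc n))" using P by (simp add: norm_mult)
  also have "\<dots> \<le> cmod (f (Suc (Suc n))) + cmod (of_real \<kappa> * w * f n)"
    unfolding e2 by (rule norm_triangle_ineq4)
  also have "cmod (of_real \<kappa> * w * f n) = \<kappa> * cmod w * cmod (f n)" using P by (simp add: norm_mult)
  also have "\<kappa> * cmod w * cmod (f n) \<le> 1 * (1/2) * cmod (f (Suc n))"
    using P w Suc.IH by (intro mult_mono) auto
  finally have A: "P * cmod (f (Suc n)) \<le> cmod (f (Suc (Suc n))) + 1/2 * cmod (f (Suc n))" by simp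
  have "3/2 * cmod (f (Suc n)) \<le> P * cmod (f (Suc n))" using P by (intro mult_right_mono) auto
  with A Suc.IH show ?case by linarith
qed

lemma seq_W:
  fixes e f :: "nat \<Rightarrow> complex" and w :: complex
  assumes w: "cmod w \<le> 1" "w \<noteq> 0"
    and rec: "\<And>n. n \<ge> 1 \<Longrightarrow> \<exists>P \<kappa>::real. 0 < \<kappa> \<and> \<kappa> \<le> 1 \<and>
                 e (Suc n) = of_real P * e n + of_real \<kappa> * w * e (n-1) \<and>
                 f (Suc n) = of_real P * f n + of_real \<kappa> * w * f (n-1)"
    and W1: "e 1 * f 0 - e 0 * f 1 = w/4"
    and n: "n \<ge> 1"
  shows "e n * f (n-1) - e (n-1) * f n \<noteq> 0 \<and> cmod (e n * f (n-1) - e (n-1) * f n) \<le> 1/4"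
  using n
proof (induction n rule: nat_induct_at_least)
  case base
  have "cmod (e 1 * f 0 - e 0 * f 1) = cmod w / 4" unfolding W1 by (simp add: norm_divide)
  thus ?case using W1 w by auto
next
  case (Suc n)
  obtain P \<kappa> :: real where P: "0 < \<kappa>" "\<kappa> \<le> 1"
    and eqe: "e (Suc n) = of_real P * e n + of_real \<kappa> * w * e (n-1)"
    and eqf: "f (Suc n) = of_real P * f n + of_real \<kappa> * w * f (n-1)"
    using rec[OF Suc.hyps] by auto
  have W: "e (Suc n) * f n - e n * f (Suc n) = - (of_real \<kappa> * w) * (e n * f (n-1) - e (n-1) * f n)"
    unfolding eqe eqf by (simp add: algebra_simps)
  have nz: "of_real \<kappa> * w \<noteq> 0" using P w by simp
  have "cmod (e (Suc n) * f n - e n * f (Suc n)) = \<kappa> * cmod w * cmod (e n * f (n-1) - e (n-1) * f n)"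
    unfolding W using P by (simp add: norm_mult)
  also have "\<dots> \<le> 1 * 1 * (1/4)" using P w Suc.IH by (intro mult_mono) auto
  finally show ?case using W nz Suc.IH by simp
qed

definition eA :: "complex \<Rightarrow> nat \<Rightarrow> complex" where
  "eA z n = (if even n then Apoly (n div 2) 0 z else Apoly (Suc n div 2) 1 z)"
definition eB :: "complex \<Rightarrow> nat \<Rightarrow> complex" where
  "eB z n = (if even n then Bpoly (n div 2) 0 z else Bpoly (Suc n div 2) 1 z)"

lemma eA_even: "eA z (2*r) = Apoly r 0 z" by (simp add: eA_def)
lemma eA_odd: "eA z (Suc (2*r)) = Apoly (r+1) 1 z" by (simp add: eA_def)
lemma eB_even: "eB z (2*r) = Bpoly r 0 z" by (simp add: eB_def)
lemma eB_odd: "eB z (Suc (2*r)) = Bpoly (r+1) 1 z" by (simp add: eB_def)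

lemma chain_rec:
  assumes "n \<ge> 1"
  shows "\<exists>P \<kappa>::real. P \<ge> 3/2 \<and> 0 < \<kappa> \<and> \<kappa> \<le> 1 \<and>
     eA z (Suc n) = of_real P * eA z n + of_real \<kappa> * (-z) * eA z (n-1) \<and>
     eB z (Suc n) = of_real P * eB z n + of_real \<kappa> * (-z) * eB z (n-1)"
proof (cases "even n")
  case True
  then obtain r where n: "n = 2*r" by auto
  with assms have r: "r \<ge> 1" by simp
  obtain q where q: "r = Suc q" using r by (cases r) auto
  have n1: "n - 1 = Suc (2*q)" using n q by simp
  have P: "(2*real r+1)/(real r+1) \<ge> 3/2" using r by (simp add: field_simps)
  have K: "0 < (4*real r+1)/(4*(real r+1))" "(4*real r+1)/(4*(real r+1)) \<le> 1" by (auto simp: field_simps)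
  have a1: "eA z (Suc n) = Apoly (r+1) 1 z" "eB z (Suc n) = Bpoly (r+1) 1 z"
    unfolding n by (simp_all only: eA_odd eB_odd)
  have a2: "eA z n = Apoly r 0 z" "eB z n = Bpoly r 0 z"
    unfolding n by (simp_all only: eA_even eB_even)
  have a3: "eA z (n-1) = Apoly r 1 z" "eB z (n-1) = Bpoly r 1 z"
    unfolding n1 eA_odd eB_odd q by simp_all
  define p where "p = (2*real r+1)/(real r+1)"
  define k where "k = (4*real r+1)/(4*(real r+1))"
  have ea: "eA z (Suc n) = of_real p * eA z n + of_real k * (-z) * eA z (n-1)"
    unfolding a1 a2 a3 p_def k_def by (rule PR1A[OF r])
  have eb: "eB z (Suc n) = of_real p * eB z n + of_real k * (-z) * eB z (n-1)"
    unfolding a1 a2 a3 p_def k_def by (rule PR1B[OF r])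
  have "p \<ge> 3/2" "0 < k" "k \<le> 1" using P K unfolding p_def k_def by auto
  thus ?thesis using ea eb by blast
next
  case False
  then obtain r where n0: "n = 2*r+1" by (auto elim: oddE)
  hence n: "n = Suc (2*r)" by simp
  have K: "0 < (4*real r+3)/(4*(real r+1))" "(4*real r+3)/(4*(real r+1)) \<le> 1" by (auto simp: field_simps)
  have n2: "Suc n = 2*(r+1)" "n - 1 = 2*r" using n by auto
  define k where "k = (4*real r+3)/(4*(real r+1))"
  have ea: "eA z (Suc n) = of_real 2 * eA z n + of_real k * (-z) * eA z (n-1)"
    unfolding n2 eA_even k_def unfolding n eA_odd by (rule PR2A)
  have eb: "eB z (Suc n) = of_real 2 * eB z n + of_real k * (-z) * eB z (n-1)"
    unfolding n2 eB_even k_def unfolding n eB_odd by (rule PR2B)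
  have "(2::real) \<ge> 3/2" "0 < k" "k \<le> 1" using K unfolding k_def by auto
  thus ?thesis using ea eb by blast
qed


lemma eA_base: "eA z 0 = 1" "eA z (Suc 0) = 1 + (-z)/4"
  by (simp_all add: eA_def Apoly_def)
lemma eB_base: "eB z 0 = 1" "eB z (Suc 0) = 1"
  by (simp_all add: eB_def Bpoly_def)

lemma core:
  fixes a b z :: complex
  assumes ab: "cmod a = cmod b" "b \<noteq> 0" and z: "z \<noteq> 0" "cmod z \<le> 1/2"
    and r: "r \<ge> 1" and h: "h \<in> {0,1}"
    and S1: "a * Apoly r 0 z - (-1)^r * b * Bpoly r 0 z = 0"
    and S2: "a * Apoly (r+h) 1 z - (-1)^(r+h) * b * Bpoly (r+h) 1 z = 0"
  shows False
proof -
  define w where "w = -z"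
  have w: "cmod w \<le> 1/2" "w \<noteq> 0" using z by (auto simp: w_def)
  have recAB: "\<And>n. n \<ge> 1 \<Longrightarrow> \<exists>P \<kappa>::real. P \<ge> 3/2 \<and> 0 < \<kappa> \<and> \<kappa> \<le> 1 \<and>
     eA z (Suc n) = of_real P * eA z n + of_real \<kappa> * w * eA z (n-1) \<and>
     eB z (Suc n) = of_real P * eB z n + of_real \<kappa> * w * eB z (n-1)"
    unfolding w_def by (rule chain_rec)
  have recB: "\<exists>P \<kappa>::real. P \<ge> 3/2 \<and> 0 < \<kappa> \<and> \<kappa> \<le> 1 \<and>
     eB z (Suc n) = of_real P * eB z n + of_real \<kappa> * w * eB z (n-1)" if n1: "n \<ge> 1" for n
  proof -
    obtain P \<kappa> :: real where "P \<ge> 3/2" "0 < \<kappa>" "\<kappa> \<le> 1"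
      "eB z (Suc n) = of_real P * eB z n + of_real \<kappa> * w * eB z (n-1)"
      using recAB[OF n1] by blast
    thus ?thesis by blast
  qed
  have recW: "\<exists>P \<kappa>::real. 0 < \<kappa> \<and> \<kappa> \<le> 1 \<and>
     eA z (Suc n) = of_real P * eA z n + of_real \<kappa> * w * eA z (n-1) \<and>
     eB z (Suc n) = of_real P * eB z n + of_real \<kappa> * w * eB z (n-1)" if n1: "n \<ge> 1" for n
  proof -
    obtain P \<kappa> :: real where "0 < \<kappa>" "\<kappa> \<le> 1"
      "eA z (Suc n) = of_real P * eA z n + of_real \<kappa> * w * eA z (n-1)"
      "eB z (Suc n) = of_real P * eB z n + of_real \<kappa> * w * eB z (n-1)"
      using recAB[OF n1] by blast
    thus ?thesis by blast
  qed
  have lowB: "1 \<le> cmod (eB z n)" for n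
  proof -
    have "1 \<le> cmod (eB z n) \<and> cmod (eB z n) \<le> cmod (eB z (Suc n))"
      by (rule seq_lower[where w=w, OF w(1) recB]) (simp_all add: eB_base)
    thus ?thesis by simp
  qed
  have Wb: "eA z n * eB z (n-1) - eA z (n-1) * eB z n \<noteq> 0 \<and>
            cmod (eA z n * eB z (n-1) - eA z (n-1) * eB z n) \<le> 1/4" if "n \<ge> 1" for n
    by (rule seq_W[where w=w, OF _ w(2) recW _ that]) (use w in \<open>auto simp: w_def eA_base eB_base\<close>)
  define s :: complex where "s = (-1)^r"
  have a0: "a \<noteq> 0" using ab by auto
  have X: "a * eA z (2*r) = s * b * eB z (2*r)" using S1 by (simp add: eA_even eB_even s_def)
  show False
  proof (cases "h = 0")
    case True
    obtain q where q: "r = Suc q" using r by (cases r) auto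
    have e: "2*r - 1 = Suc (2*q)" using q by simp
    have X': "a * eA z (2*r-1) = s * b * eB z (2*r-1)"
      using S2 True unfolding e by (simp add: eA_odd eB_odd s_def q eq_neg_iff_add_eq_0)
    have "a * (eA z (2*r) * eB z (2*r-1) - eA z (2*r-1) * eB z (2*r))
        = (a * eA z (2*r)) * eB z (2*r-1) - (a * eA z (2*r-1)) * eB z (2*r)" by (simp add: algebra_simps)
    also have "\<dots> = 0" unfolding X X' by simp
    finally show False using Wb[of "2*r"] r a0 by simp
  next
    case False
    hence h1: "h = 1" using h by auto
    have X': "a * eA z (Suc (2*r)) = - s * b * eB z (Suc (2*r))"
      using S2 h1 by (simp add: eA_odd eB_odd s_def eq_neg_iff_add_eq_0)
    have "a * (eA z (Suc (2*r)) * eB z (2*r) - eA z (2*r) * eB z (Suc (2*r)))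
        = (a * eA z (Suc (2*r))) * eB z (2*r) - (a * eA z (2*r)) * eB z (Suc (2*r))" by (simp add: algebra_simps)
    also have "\<dots> = - 2 * s * b * (eB z (2*r) * eB z (Suc (2*r)))" unfolding X X' by (simp add: algebra_simps)
    finally have eq: "a * (eA z (Suc (2*r)) * eB z (2*r) - eA z (2*r) * eB z (Suc (2*r)))
        = - 2 * s * b * (eB z (2*r) * eB z (Suc (2*r)))" .
    have ns: "cmod s = 1" by (simp add: s_def norm_power)
    have "cmod a * cmod (eA z (Suc (2*r)) * eB z (2*r) - eA z (2*r) * eB z (Suc (2*r)))
        = 2 * cmod b * (cmod (eB z (2*r)) * cmod (eB z (Suc (2*r))))"
      using arg_cong[OF eq, of cmod] ns by (simp add: norm_mult)
    hence eq2: "cmod (eA z (Suc (2*r)) * eB z (2*r) - eA z (2*r) * eB z (Suc (2*r)))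
        = 2 * (cmod (eB z (2*r)) * cmod (eB z (Suc (2*r))))" using ab by simp
    have "1 \<le> cmod (eB z (2*r)) * cmod (eB z (Suc (2*r)))"
      using lowB[of "2*r"] lowB[of "Suc (2*r)"] by (metis mult_mono' mult_1 zero_le_one)
    moreover have "cmod (eA z (Suc (2*r)) * eB z (2*r) - eA z (2*r) * eB z (Suc (2*r))) \<le> 1/4"
      using Wb[of "Suc (2*r)"] by simp
    ultimately show False using eq2 by linarith
  qed
qed

lemma poly_id:
  fixes i s x y T :: complex
  assumes ii: "i*i = -1" and ss: "s*s = T"
  shows "4*(1+i*s)*(x-i*s*y)^4 - 4*(-1+i*s)*(x+i*s*y)^4 = 8*(x^4+4*T*x^3*y - 6*T*x^2*y^2 - 4*T^2*x*y^3 + T^2*y^4)"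
  using ii ss by algebra

lemma cmod_lin: "cmod (of_int x + \<i> * complex_of_real q * of_int y) = sqrt (x^2 + q^2 * y^2)"
  "cmod (of_int x - \<i> * complex_of_real q * of_int y) = sqrt (x^2 + q^2 * y^2)"
  by (simp_all add: cmod_def power_mult_distrib)

lemma geom1:
  fixes t x y :: int and \<alpha> \<beta> :: complex
  assumes ht: "t > 0"
    and h\<alpha>: "\<alpha> ^ 4 = 1 + \<i> * sqt t"
    and h\<beta>: "\<beta> ^ 4 = -1 + \<i> * sqt t"
    and hx: "x > 0"
  shows "xi t \<alpha> x y \<noteq> 0" "cmod (eta t \<beta> x y / xi t \<alpha> x y) = 1"
proof -
  define q where "q = sqrt (real_of_int t)"
  have sq: "sqt t = complex_of_real q" by (simp add: sqt_def q_def)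
  have a0: "\<alpha> \<noteq> 0" using h\<alpha> by (auto simp: complex_eq_iff sq)
  have u0: "of_int x - \<i> * sqt t * of_int y \<noteq> 0" using hx by (auto simp: complex_eq_iff sq)
  show xi0: "xi t \<alpha> x y \<noteq> 0" unfolding xi_def using a0 u0 by simp
  have "cmod \<alpha> ^ 4 = cmod (1 + \<i> * sqt t)" by (metis h\<alpha> norm_power)
  also have "\<dots> = cmod (-1 + \<i> * sqt t)" by (simp add: cmod_def sq)
  also have "\<dots> = cmod \<beta> ^ 4" by (metis h\<beta> norm_power)
  finally have ab: "cmod \<alpha> = cmod \<beta>" by (rule power_eq_imp_eq_base) auto
  have "cmod (eta t \<beta> x y) = cmod (xi t \<alpha> x y)"
    unfolding eta_def xi_def norm_mult sq cmod_lin ab by simp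
  thus "cmod (eta t \<beta> x y / xi t \<alpha> x y) = 1" using xi0 by (simp add: norm_divide)
qed


lemma geom2:
  fixes t x y :: int and \<alpha> \<beta> :: complex
  assumes ht: "t \<ge> 16"
    and h\<alpha>: "\<alpha> ^ 4 = 1 + \<i> * sqt t"
    and h\<beta>: "\<beta> ^ 4 = -1 + \<i> * sqt t"
    and hx: "x > 0" and hy: "y > 0"
    and hP: "0 < Pform t x y" "Pform t x y \<le> t^2"
  shows "zf t \<alpha> \<beta> x y \<noteq> 0" "cmod (zf t \<alpha> \<beta> x y) \<le> 1/2"
proof -
  define q where "q = sqrt (real_of_int t)"
  have q2: "q^2 = real_of_int t" using ht by (simp add: q_def)
  have q4: "q \<ge> 4" unfolding q_def using real_sqrt_le_mono[of 16 "real_of_int t"] ht by simp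
  have sq: "sqt t = complex_of_real q" by (simp add: sqt_def q_def)
  define u where "u = of_int x - \<i> * sqt t * of_int y"
  define v where "v = of_int x + \<i> * sqt t * of_int y"
  define c where "c = complex_of_real (sqrt 2)"
  have c4: "c^4 = 4"
  proof -
    have "sqrt (2::real) ^ 4 = (sqrt 2 * sqrt 2) * (sqrt 2 * sqrt 2)" by (simp only: power4_eq_xxxx mult.assoc)
    hence r4: "sqrt (2::real) ^ 4 = 4" by simp
    have "c^4 = complex_of_real (sqrt 2 ^ 4)" unfolding c_def by simp
    thus ?thesis unfolding r4 by simp
  qed
  have xi0: "xi t \<alpha> x y \<noteq> 0" using geom1[OF _ h\<alpha> h\<beta> hx] ht by simp
  have xi4: "(xi t \<alpha> x y)^4 = 4 * (1 + \<i> * sqt t) * u^4"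
    unfolding xi_def u_def c_def[symmetric] by (simp add: power_mult_distrib c4 h\<alpha>)
  have eta4: "(eta t \<beta> x y)^4 = 4 * (-1 + \<i> * sqt t) * v^4"
    unfolding eta_def v_def c_def[symmetric] by (simp add: power_mult_distrib c4 h\<beta>)
  have ss: "sqt t * sqt t = of_int t"
  proof -
    have "sqt t * sqt t = complex_of_real (q^2)" unfolding sq by (simp add: power2_eq_square)
    thus ?thesis using q2 by simp
  qed
  have diff: "(xi t \<alpha> x y)^4 - (eta t \<beta> x y)^4 = 8 * of_int (Pform t x y)"
    unfolding xi4 eta4 u_def v_def Pform_def using poly_id[of \<i> "sqt t" "of_int t" "of_int x" "of_int y", OF _ ss]
    by simp
  have z: "zf t \<alpha> \<beta> x y = 8 * of_int (Pform t x y) / (xi t \<alpha> x y)^4"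
    unfolding zf_def diff[symmetric] using xi0 by (simp add: field_simps power_divide)
  show "zf t \<alpha> \<beta> x y \<noteq> 0" unfolding z using xi0 hP by simp
  have n1: "cmod (1 + \<i> * sqt t) \<ge> 4"
  proof -
    have "cmod (1 + \<i> * sqt t) \<ge> \<bar>Im (1 + \<i> * sqt t)\<bar>" by (rule abs_Im_le_cmod)
    thus ?thesis using q4 by (simp add: sq)
  qed
  have nu: "cmod u ^ 2 = x^2 + t*y^2"
    unfolding u_def sq cmod_lin using ht by (simp add: q2 add_nonneg_nonneg)
  have xy: "real_of_int (x^2 + t*y^2) \<ge> t"
  proof -
    have "t*y^2 \<ge> t*1" using hy ht by (intro mult_left_mono) (auto simp: self_le_power)
    moreover have "x^2 \<ge> 0" by simp
    ultimately show ?thesis by linarith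
  qed
  have nu4: "cmod u ^ 4 \<ge> (real_of_int t)^2"
  proof -
    have "cmod u ^ 4 = (cmod u ^ 2)^2" by (simp add: power_mult[symmetric])
    also have "\<dots> = (real_of_int (x^2 + t*y^2))^2" unfolding nu by simp
    finally show ?thesis using xy ht by (simp add: power_mono)
  qed
  have nxi: "cmod ((xi t \<alpha> x y)^4) = 4 * cmod (1 + \<i> * sqt t) * cmod u ^ 4"
    unfolding xi4 by (simp only: norm_mult norm_power) simp
  have big: "cmod ((xi t \<alpha> x y)^4) \<ge> 16 * (real_of_int t)^2"
  proof -
    have "4 * 4 * (real_of_int t)^2 \<le> 4 * cmod (1 + \<i> * sqt t) * cmod u ^ 4"
      using n1 nu4 by (intro mult_mono) auto
    thus ?thesis unfolding nxi by simp
  qed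
  have "cmod (zf t \<alpha> \<beta> x y) = 8 * real_of_int (Pform t x y) / cmod ((xi t \<alpha> x y)^4)"
    unfolding z using hP by (simp add: norm_divide norm_mult)
  also have "\<dots> \<le> 8 * (real_of_int t)^2 / (16 * (real_of_int t)^2)"
  proof (rule frac_le)
    show "8 * real_of_int (Pform t x y) \<le> 8 * (real_of_int t)^2" using hP(2) by (simp add: of_int_le_iff[symmetric])
  qed (use hP big ht in auto)
  also have "\<dots> = 1/2" using ht by simp
  finally show "cmod (zf t \<alpha> \<beta> x y) \<le> 1/2" .
qed

theorem lemma6p2:
  fixes t x1 y1 x2 y2 :: int and \<alpha> \<beta> \<omega> :: complex and r h :: nat
  assumes ht: "t > 204"
    and h\<alpha>: "\<alpha> ^ 4 = 1 + \<i> * sqt t"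
    and h\<beta>: "\<beta> ^ 4 = -1 + \<i> * sqt t"
    and h\<omega>: "\<omega> \<in> {1, -1, \<i>, -\<i>}"
    and hne: "(x1, y1) \<noteq> (x2, y2)"
    and hpos1: "x1 > 0" "y1 > 0" and hcop1: "coprime x1 y1"
    and hpos2: "x2 > 0" "y2 > 0" and hcop2: "coprime x2 y2"
    and hP1: "0 < Pform t x1 y1" "Pform t x1 y1 \<le> t^2"
    and hP2: "0 < Pform t x2 y2" "Pform t x2 y2 \<le> t^2"
    and hxy1: "x1 * y1 > 64 * t^3"
    and hxy2: "x2 * y2 > 64 * t^3"
    and hrel1: "related t \<alpha> \<beta> x1 y1 \<omega>"
    and hrel2: "related t \<alpha> \<beta> x2 y2 \<omega>"
    and hsize: "cmod (xi t \<alpha> x2 y2) \<ge> cmod (xi t \<alpha> x1 y1)"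
    and hr: "r > 0"
    and hh: "h \<in> {0, 1}"
  shows "\<not> (Sigma t \<alpha> \<beta> x1 y1 x2 y2 r 0 = 0 \<and> Sigma t \<alpha> \<beta> x1 y1 x2 y2 (r + h) 1 = 0)"
proof
  assume both: "Sigma t \<alpha> \<beta> x1 y1 x2 y2 r 0 = 0 \<and> Sigma t \<alpha> \<beta> x1 y1 x2 y2 (r + h) 1 = 0"
  define a where "a = eta t \<beta> x2 y2 / xi t \<alpha> x2 y2"
  define b where "b = eta t \<beta> x1 y1 / xi t \<alpha> x1 y1"
  have t0: "t > 0" "t \<ge> 16" using ht by auto
  have na: "cmod a = 1" unfolding a_def using geom1[OF t0(1) h\<alpha> h\<beta> hpos2(1)] by simp
  have nb: "cmod b = 1" unfolding b_def using geom1[OF t0(1) h\<alpha> h\<beta> hpos1(1)] by simp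
  have z: "zf t \<alpha> \<beta> x1 y1 \<noteq> 0" "cmod (zf t \<alpha> \<beta> x1 y1) \<le> 1/2"
    using geom2[OF t0(2) h\<alpha> h\<beta> hpos1 hP1] by auto
  have r1: "r \<ge> 1" using hr by simp
  show False
  proof (rule core[of a b "zf t \<alpha> \<beta> x1 y1" r h])
    show "cmod a = cmod b" using na nb by simp
    show "b \<noteq> 0" using nb by auto
  qed (use z r1 hh both in \<open>simp_all add: Sigma_def a_def b_def\<close>)
qed

end
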